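(* Let $\mathbf{E}\subseteq\mathbf{A}$ be finite symmetric integral relation algebras. For every $n\in\omega$, the set $$\{1'\}\cup\{x^{(i)}:x\text{ a diversity atom of }\mathbf{A},\ i<n\}\cup\{J(a,n):a\text{ a diversity atom of }\mathbf{A}\}$$ is the set of atoms of a subalgebra of $\mathbf{C}_{\mathbf{E}}(\mathbf{A})$.
   Context: Relation algebras are in the sense of Tarski; $1'$ identity, $0'$ its complement, $;$ relative product; integral: $1'$ is an atom; symmetric: $x^{\smile}=x$; a diversity atom is an atom below $0'$. The algebra $\mathbf{C}_{\mathbf{E}}(\mathbf{A})$: for each atom $x$ of $\mathbf{A}$ let $c(x)$ be the atom of $\mathbf{E}$ with $x\le c(x)$; $T(i,j,k)$ iff $(i\le j=k)$ or $(j\le k=i)$ or $(k\le i=j)$. Atoms: $1'$ and $x^{(i)}$ for diversity atoms $x$ of $\mathbf{A}$ and $i\in\omega$ (distinct formal symbols). $C$ is the set of all permutations of $(1',1',1')$, $(1',x^{(i)},x^{(i)})$, and $(x^{(i)},y^{(j)},z^{(k)})$ with $x;y\ge z$ in $\mathbf{A}$ and ($c(x)=c(y)=c(z)\Rightarrow T(i,j,k)$). $\mathbf{C}_{\mathbf{E}}(\mathbf{A})$ is the algebra of all sets of atoms with set Boolean operations, identity $\{1'\}$, converse the identity map, and $X;Y=\{w:\exists u\in X,\exists v\in Y,(u,v,w)\in C\}$. For $a\in\mathbf{A}$ and $n\in\omega$, $J(a,n)$ is the join of all $x^{(i)}$ with $x$ a diversity atom of $\mathbf{A}$, $x\le a$,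 $n\le i$, together with $1'$ if $1'\le a$. *)

theory Defs
  imports Main
begin

definition relation_algebra ::
  "('a::boolean_algebra \<Rightarrow> 'a \<Rightarrow> 'a) \<Rightarrow> 'a \<Rightarrow> ('a \<Rightarrow> 'a) \<Rightarrow> bool" where
  "relation_algebra rp e conv \<longleftrightarrow>
     (\<forall>x y z. rp (rp x y) z = rp x (rp y z)) \<and>
     (\<forall>x y z. rp (sup x y) z = sup (rp x z) (rp y z)) \<and>
     (\<forall>x. rp x e = x) \<and>
     (\<forall>x. conv (conv x) = x) \<and>
     (\<forall>x y. conv (sup x y) = sup (conv x) (conv y)) \<and>
     (\<forall>x y. conv (rp x y) = rp (conv y) (conv x)) \<and>
     (\<forall>x y. rp (conv x) (- (rp x y)) \<le> - y)"

definition is_atom :: "'a::boolean_algebra \<Rightarrow> bool" where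
  "is_atom x \<longleftrightarrow> x \<noteq> bot \<and> (\<forall>y. y \<le> x \<longrightarrow> y = bot \<or> y = x)"

definition integral_ra :: "'a::boolean_algebra \<Rightarrow> bool" where
  "integral_ra e \<longleftrightarrow> is_atom e"

definition symmetric_ra :: "('a::boolean_algebra \<Rightarrow> 'a) \<Rightarrow> bool" where
  "symmetric_ra conv \<longleftrightarrow> (\<forall>x. conv x = x)"

definition diversity_atom :: "'a::boolean_algebra \<Rightarrow> 'a \<Rightarrow> bool" where
  "diversity_atom e x \<longleftrightarrow> is_atom x \<and> x \<le> - e"

definition ra_subalgebra ::
  "'a::boolean_algebra set \<Rightarrow> ('a \<Rightarrow> 'a \<Rightarrow> 'a) \<Rightarrow> 'a \<Rightarrow> ('a \<Rightarrow> 'a) \<Rightarrow> bool" where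
  "ra_subalgebra E rp e conv \<longleftrightarrow>
     bot \<in> E \<and> top \<in> E \<and> e \<in> E \<and>
     (\<forall>x\<in>E. \<forall>y\<in>E. sup x y \<in> E) \<and>
     (\<forall>x\<in>E. \<forall>y\<in>E. inf x y \<in> E) \<and>
     (\<forall>x\<in>E. - x \<in> E) \<and>
     (\<forall>x\<in>E. \<forall>y\<in>E. rp x y \<in> E) \<and>
     (\<forall>x\<in>E. conv x \<in> E)"

definition atom_in :: "'a::boolean_algebra set \<Rightarrow> 'a \<Rightarrow> bool" where
  "atom_in E x \<longleftrightarrow> x \<in> E \<and> x \<noteq> bot \<and> (\<forall>y\<in>E. y \<le> x \<longrightarrow> y = bot \<or> y = x)"

definition cE :: "'a::boolean_algebra set \<Rightarrow> 'a \<Rightarrow> 'a" where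
  "cE E x = (THE z. atom_in E z \<and> x \<le> z)"

definition Tpred :: "nat \<Rightarrow> nat \<Rightarrow> nat \<Rightarrow> bool" where
  "Tpred i j k \<longleftrightarrow> (i \<le> j \<and> j = k) \<or> (j \<le> k \<and> k = i) \<or> (k \<le> i \<and> i = j)"

text \<open>Atoms of C_E(A): CId is 1', CAt x i is x^(i).\<close>
datatype 'a catom = CId | CAt 'a nat

definition C_atoms :: "'a::boolean_algebra \<Rightarrow> 'a catom set" where
  "C_atoms e = {CId} \<union> {CAt x i | x i. diversity_atom e x}"

definition C_base ::
  "'a::boolean_algebra set \<Rightarrow> ('a \<Rightarrow> 'a \<Rightarrow> 'a) \<Rightarrow> 'a \<Rightarrow> 'a catom \<Rightarrow> 'a catom \<Rightarrow> 'a catom \<Rightarrow> bool" where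
  "C_base E rp e u v w \<longleftrightarrow>
     (u = CId \<and> v = CId \<and> w = CId) \<or>
     (\<exists>x i. diversity_atom e x \<and> u = CId \<and> v = CAt x i \<and> w = CAt x i) \<or>
     (\<exists>x y z i j k. diversity_atom e x \<and> diversity_atom e y \<and> diversity_atom e z \<and>
        u = CAt x i \<and> v = CAt y j \<and> w = CAt z k \<and> z \<le> rp x y \<and>
        ((cE E x = cE E y \<and> cE E y = cE E z) \<longrightarrow> Tpred i j k))"

definition C_cyc ::
  "'a::boolean_algebra set \<Rightarrow> ('a \<Rightarrow> 'a \<Rightarrow> 'a) \<Rightarrow> 'a \<Rightarrow> 'a catom \<Rightarrow> 'a catom \<Rightarrow> 'a catom \<Rightarrow> bool" where
  "C_cyc E rp e u v w \<longleftrightarrow>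
     C_base E rp e u v w \<or> C_base E rp e u w v \<or> C_base E rp e v u w \<or>
     C_base E rp e v w u \<or> C_base E rp e w u v \<or> C_base E rp e w v u"

text \<open>Relative product in C_E(A); converse is the identity map; identity is {CId};
  Boolean operations are the set operations on subsets of C_atoms e.\<close>
definition C_comp ::
  "'a::boolean_algebra set \<Rightarrow> ('a \<Rightarrow> 'a \<Rightarrow> 'a) \<Rightarrow> 'a \<Rightarrow> 'a catom set \<Rightarrow> 'a catom set \<Rightarrow> 'a catom set" where
  "C_comp E rp e X Y = {w. \<exists>u\<in>X. \<exists>v\<in>Y. C_cyc E rp e u v w}"

definition C_subalgebra ::
  "'a::boolean_algebra set \<Rightarrow> ('a \<Rightarrow> 'a \<Rightarrow> 'a) \<Rightarrow> 'a \<Rightarrow> 'a catom set set \<Rightarrow> bool" where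
  "C_subalgebra E rp e S \<longleftrightarrow>
     S \<subseteq> Pow (C_atoms e) \<and>
     {} \<in> S \<and> C_atoms e \<in> S \<and> {CId} \<in> S \<and>
     (\<forall>X\<in>S. \<forall>Y\<in>S. X \<union> Y \<in> S) \<and>
     (\<forall>X\<in>S. \<forall>Y\<in>S. X \<inter> Y \<in> S) \<and>
     (\<forall>X\<in>S. C_atoms e - X \<in> S) \<and>
     (\<forall>X\<in>S. \<forall>Y\<in>S. C_comp E rp e X Y \<in> S)"

definition atoms_of_C :: "'b set set \<Rightarrow> 'b set set" where
  "atoms_of_C S = {X \<in> S. X \<noteq> {} \<and> (\<forall>Y\<in>S. Y \<subseteq> X \<longrightarrow> Y = {} \<or> Y = X)}"

definition Jset :: "'a::boolean_algebra \<Rightarrow> 'a \<Rightarrow> nat \<Rightarrow> 'a catom set" where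
  "Jset e a n = {CAt x i | x i. diversity_atom e x \<and> x \<le> a \<and> n \<le> i}
                \<union> (if e \<le> a then {CId} else {})"

end

theory Submission
  imports Defs
begin

fun blk :: "nat \<Rightarrow> 'a catom \<Rightarrow> 'a catom set" where
  "blk n CId = {CId}"
| "blk n (CAt x i) = (if i < n then {CAt x i} else {CAt x j | j. n \<le> j})"

lemma blk_self: "w \<in> blk n w"
  by (cases w) auto

lemma blk_sym: "u \<in> blk n w \<Longrightarrow> blk n u = blk n w"
  by (cases w; cases u) (auto split: if_splits)

definition gmap :: "nat \<Rightarrow> nat \<Rightarrow> nat \<Rightarrow> nat" where
  "gmap n k i = (if n \<le> i then k else i)"

fun phi :: "nat \<Rightarrow> nat \<Rightarrow> 'a catom \<Rightarrow> 'a catom" where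
  "phi n k CId = CId"
| "phi n k (CAt x i) = CAt x (gmap n k i)"

lemma gmap_mono: "n \<le> k \<Longrightarrow> i \<le> j \<Longrightarrow> gmap n k i \<le> gmap n k j"
  by (auto simp: gmap_def)

lemma T_gmap: "n \<le> k \<Longrightarrow> Tpred i j l \<Longrightarrow> Tpred (gmap n k i) (gmap n k j) (gmap n k l)"
  unfolding Tpred_def using gmap_mono[of n k] by metis

lemma base_phi: "n \<le> k \<Longrightarrow> C_base E rp e u v w \<Longrightarrow> C_base E rp e (phi n k u) (phi n k v) (phi n k w)"
  unfolding C_base_def
  apply (elim disjE exE conjE)
    apply simp
   apply (rule disjI2, rule disjI1, force)
  apply (rule disjI2, rule disjI2)
  subgoal for x y z i j l
    apply (rule exI[of _ x], rule exI[of _ y], rule exI[of _ z])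
    apply (rule exI[of _ "gmap n k i"], rule exI[of _ "gmap n k j"], rule exI[of _ "gmap n k l"])
    using T_gmap[of n k i j l] by auto
  done

lemma cyc_phi: "n \<le> k \<Longrightarrow> C_cyc E rp e u v w \<Longrightarrow> C_cyc E rp e (phi n k u) (phi n k v) (phi n k w)"
  unfolding C_cyc_def using base_phi by metis

lemma phi_blk: "n \<le> k \<Longrightarrow> phi n k u \<in> blk n u"
  by (cases u) (auto simp: gmap_def)

lemma base_atoms: "C_base E rp e u v w \<Longrightarrow> u \<in> C_atoms e \<and> v \<in> C_atoms e \<and> w \<in> C_atoms e"
  unfolding C_base_def C_atoms_def by auto

lemma cyc_atoms: "C_cyc E rp e u v w \<Longrightarrow> w \<in> C_atoms e"
  unfolding C_cyc_def using base_atoms by metis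

lemma blk_atoms: "w \<in> C_atoms e \<Longrightarrow> blk n w \<subseteq> C_atoms e"
  unfolding C_atoms_def by (cases w) auto

theorem lemma5:
  fixes rp :: "'a::{finite, boolean_algebra} \<Rightarrow> 'a \<Rightarrow> 'a"
    and e :: 'a and conv :: "'a \<Rightarrow> 'a"
    and E :: "'a set" and n :: nat
  assumes "relation_algebra rp e conv"
    and "symmetric_ra conv" and "integral_ra e"
    and "ra_subalgebra E rp e conv"
    and "\<forall>x\<in>E. conv x = x" and "atom_in E e"
  shows "\<exists>S. C_subalgebra E rp e S \<and>
           atoms_of_C S =
             {{CId}} \<union> {{CAt x i} | x i. diversity_atom e x \<and> i < n}
             \<union> {Jset e a n | a. diversity_atom e a}"
proof -
  define S where "S = {X. X \<subseteq> C_atoms e \<and> (\<forall>w\<in>X. blk n w \<subseteq> X)}"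
  have comp: "C_comp E rp e X Y \<in> S" if "X \<in> S" "Y \<in> S" for X Y
  proof -
    have "C_comp E rp e X Y \<subseteq> C_atoms e"
      unfolding C_comp_def using cyc_atoms by blast
    moreover have "blk n w \<subseteq> C_comp E rp e X Y" if w: "w \<in> C_comp E rp e X Y" for w
    proof
      fix w' assume w': "w' \<in> blk n w"
      from w obtain u v where uv: "u \<in> X" "v \<in> Y" "C_cyc E rp e u v w"
        unfolding C_comp_def by blast
      show "w' \<in> C_comp E rp e X Y"
      proof (cases "w' = w")
        case True then show ?thesis using w by simp
      next
        case False
        then obtain z k k' where zk: "w = CAt z k" "w' = CAt z k'" "n \<le> k" "n \<le> k'"
          using w' by (cases w) (auto split: if_splits)
        have "phi n k' w = w'" using zk by (simp add: gmap_def)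
        moreover have "phi n k' u \<in> X" using phi_blk[of n k' u] uv \<open>X \<in> S\<close> zk
          unfolding S_def by blast
        moreover have "phi n k' v \<in> Y" using phi_blk[of n k' v] uv \<open>Y \<in> S\<close> zk
          unfolding S_def by blast
        moreover have "C_cyc E rp e (phi n k' u) (phi n k' v) (phi n k' w)"
          using cyc_phi uv zk by blast
        ultimately show ?thesis unfolding C_comp_def by blast
      qed
    qed
    ultimately show ?thesis unfolding S_def by blast
  qed
  have compl: "C_atoms e - X \<in> S" if "X \<in> S" for X
  proof -
    have "blk n w \<subseteq> C_atoms e - X" if w: "w \<in> C_atoms e - X" for w
    proof
      fix u assume u: "u \<in> blk n w"
      have "u \<notin> X"
      proof
        assume "u \<in> X"
        then have "blk n u \<subseteq> X" using \<open>X \<in> S\<close> unfolding S_def by blast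
        then show False using blk_sym[OF u] blk_self[of w n] w by blast
      qed
      then show "u \<in> C_atoms e - X" using u blk_atoms[of w e n] w by blast
    qed
    then show ?thesis unfolding S_def by blast
  qed
  have CId_S: "{CId} \<in> S" unfolding S_def C_atoms_def by auto
  have top_S: "C_atoms e \<in> S" unfolding S_def using blk_atoms by auto
  have sub: "C_subalgebra E rp e S"
    unfolding C_subalgebra_def
  proof (intro conjI ballI)
    show "S \<subseteq> Pow (C_atoms e)" unfolding S_def by blast
    show "{} \<in> S" unfolding S_def by blast
    fix X Y assume "X \<in> S" "Y \<in> S"
    then show "X \<union> Y \<in> S" "X \<inter> Y \<in> S" unfolding S_def by blast+
  qed (use comp compl CId_S top_S in auto)
  have blkS: "blk n w \<in> S" if "w \<in> C_atoms e" for w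
    unfolding S_def using blk_atoms[OF that] blk_sym by blast
  have atoms: "atoms_of_C S = blk n ` C_atoms e"
  proof
    show "atoms_of_C S \<subseteq> blk n ` C_atoms e"
    proof
      fix X assume X: "X \<in> atoms_of_C S"
      then obtain w where w: "w \<in> X" unfolding atoms_of_C_def by blast
      have wa: "w \<in> C_atoms e" using X w unfolding atoms_of_C_def S_def by blast
      have "blk n w \<subseteq> X" using X w unfolding atoms_of_C_def S_def by blast
      then have "blk n w = X" using X blkS[OF wa] blk_self[of w n]
        unfolding atoms_of_C_def by blast
      then show "X \<in> blk n ` C_atoms e" using wa by blast
    qed
    show "blk n ` C_atoms e \<subseteq> atoms_of_C S"
    proof
      fix X assume "X \<in> blk n ` C_atoms e"
      then obtain w where wa: "w \<in> C_atoms e" and X: "X = blk n w" by blast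
      have "Y = {} \<or> Y = X" if "Y \<in> S" "Y \<subseteq> X" for Y
      proof (cases "Y = {}")
        case False
        then obtain u where u: "u \<in> Y" by blast
        then have "blk n u \<subseteq> Y" using that unfolding S_def by blast
        moreover have "blk n u = X" using blk_sym u that X by blast
        ultimately show ?thesis using that by blast
      qed simp
      then show "X \<in> atoms_of_C S" unfolding atoms_of_C_def
        using blkS[OF wa] X blk_self[of w n] by blast
    qed
  qed
  have eatom: "is_atom e" using assms(3) unfolding integral_ra_def .
  have J: "Jset e a n = blk n (CAt a n)" if a: "diversity_atom e a" for a
  proof -
    have "\<not> e \<le> a"
    proof
      assume "e \<le> a"
      then have "e \<le> - e" using a unfolding diversity_atom_def by (meson order_trans)
      then have "e = bot" by (metis inf.orderE inf_compl_bot)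
      then show False using eatom unfolding is_atom_def by simp
    qed
    moreover have "x = a" if "diversity_atom e x" "x \<le> a" for x
      using that a unfolding diversity_atom_def is_atom_def by blast
    ultimately show ?thesis unfolding Jset_def using a by auto
  qed
  have eq: "blk n ` C_atoms e =
             {{CId}} \<union> {{CAt x i} | x i. diversity_atom e x \<and> i < n}
             \<union> {Jset e a n | a. diversity_atom e a}"
  proof
    show "blk n ` C_atoms e \<subseteq> {{CId}} \<union> {{CAt x i} | x i. diversity_atom e x \<and> i < n}
             \<union> {Jset e a n | a. diversity_atom e a}"
    proof
      fix X assume "X \<in> blk n ` C_atoms e"
      then obtain w where wa: "w \<in> C_atoms e" and X: "X = blk n w" by blast
      show "X \<in> {{CId}} \<union> {{CAt x i} | x i. diversity_atom e x \<and> i < n}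
             \<union> {Jset e a n | a. diversity_atom e a}"
      proof (cases w)
        case CId then have "X = {CId}" using X by simp
          then show ?thesis by (intro UnI1) blast
      next
        case (CAt x i)
        then have dx: "diversity_atom e x" using wa unfolding C_atoms_def by auto
        show ?thesis
        proof (cases "i < n")
          case True
          then have "X = {CAt x i}" using X CAt by simp
          then show ?thesis using True dx by (intro UnI1 UnI2) blast
        next
          case False
          then have "X = Jset e x n" using X CAt J[OF dx] by simp
          then show ?thesis using dx by (intro UnI2) blast
        qed
      qed
    qed
    show "{{CId}} \<union> {{CAt x i} | x i. diversity_atom e x \<and> i < n}
             \<union> {Jset e a n | a. diversity_atom e a} \<subseteq> blk n ` C_atoms e"
    proof
      fix X assume "X \<in> {{CId}} \<union> {{CAt x i} | x i. diversity_atom e x \<and> i < n}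
             \<union> {Jset e a n | a. diversity_atom e a}"
      then consider "X = {CId}" | x i where "diversity_atom e x" "i < n" "X = {CAt x i}"
        | a where "diversity_atom e a" "X = Jset e a n" by blast
      then show "X \<in> blk n ` C_atoms e"
      proof cases
        case 1
        then have "X = blk n CId" by simp
        moreover have "CId \<in> C_atoms e" unfolding C_atoms_def by simp
        ultimately show ?thesis by blast
      next
        case (2 x i)
        then have "X = blk n (CAt x i)" by simp
        moreover have "CAt x i \<in> C_atoms e" using 2 unfolding C_atoms_def by auto
        ultimately show ?thesis by blast
      next
        case (3 a)
        then have "X = blk n (CAt a n)" using J by simp
        moreover have "CAt a n \<in> C_atoms e" using 3 unfolding C_atoms_def by auto
        ultimately show ?thesis by blast
      qed
    qed
  qed
  show ?thesis
    apply (rule exI[of _ S])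
    apply (rule conjI[OF sub])
    apply (subst atoms)
    apply (rule eq)
    done
qed

end
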